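(* Let $\mathfrak{n}$ be a $2$-step nilpotent real Lie algebra with center $\mathfrak{z}$ such that $\mathfrak{n}'=[\mathfrak{n},\mathfrak{n}]=\mathfrak{z}$ and $\dim\mathfrak{n}'$ is odd. Then every complex structure on $\mathfrak{n}$ is $3$-step.
   Context: A complex structure on a real Lie algebra $\mathfrak{g}$ is a linear map $J:\mathfrak{g}\to\mathfrak{g}$ with $J^2=-I$ and $N_J(x,y):=[x,y]+J([Jx,y]+[x,Jy])-[Jx,Jy]=0$ for all $x,y\in\mathfrak{g}$. Given such $J$, define inductively $\mathfrak{a}_0(J)=0$ and $\mathfrak{a}_\ell(J)=\{x\in\mathfrak{g}: [x,\mathfrak{g}]\subset\mathfrak{a}_{\ell-1}(J)\text{ and }[Jx,\mathfrak{g}]\subset\mathfrak{a}_{\ell-1}(J)\}$ for $\ell\ge1$. $J$ is called nilpotent if $\mathfrak{a}_t(J)=\mathfrak{g}$ for some positive integer $t$, and $t$-step if $t$ is the smallest such integer. A Lie algebra $\mathfrak{n}$ is $2$-step nilpotent if it is non-abelian and $\mathfrak{n}'\subset\mathfrak{z}$. *)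

theory Defs
  imports "HOL-Analysis.Analysis"
begin

text \<open>A finite-dimensional real Lie algebra: the underlying space is a
euclidean_space type (every finite-dimensional real vector space is of this form);
the bracket is bilinear, alternating and satisfies the Jacobi identity.\<close>

definition lie_algebra :: "('a::euclidean_space \<Rightarrow> 'a \<Rightarrow> 'a) \<Rightarrow> bool" where
  "lie_algebra br \<longleftrightarrow> bilinear br \<and> (\<forall>x. br x x = 0) \<and>
     (\<forall>x y z. br x (br y z) + br y (br z x) + br z (br x y) = 0)"

definition derived_alg :: "('a::euclidean_space \<Rightarrow> 'a \<Rightarrow> 'a) \<Rightarrow> 'a set" where
  "derived_alg br = span {br x y | x y. True}"

definition center :: "('a::euclidean_space \<Rightarrow> 'a \<Rightarrow> 'a) \<Rightarrow> 'a set" where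
  "center br = {x. \<forall>y. br x y = 0}"

definition two_step_nilpotent :: "('a::euclidean_space \<Rightarrow> 'a \<Rightarrow> 'a) \<Rightarrow> bool" where
  "two_step_nilpotent br \<longleftrightarrow> (\<exists>x y. br x y \<noteq> 0) \<and> derived_alg br \<subseteq> center br"

definition complex_structure ::
  "('a::euclidean_space \<Rightarrow> 'a \<Rightarrow> 'a) \<Rightarrow> ('a \<Rightarrow> 'a) \<Rightarrow> bool" where
  "complex_structure br J \<longleftrightarrow> linear J \<and> (\<forall>x. J (J x) = - x) \<and>
     (\<forall>x y. br x y + J (br (J x) y + br x (J y)) - br (J x) (J y) = 0)"

fun asc_series :: "('a::euclidean_space \<Rightarrow> 'a \<Rightarrow> 'a) \<Rightarrow> ('a \<Rightarrow> 'a) \<Rightarrow> nat \<Rightarrow> 'a set" where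
  "asc_series br J 0 = {0}"
| "asc_series br J (Suc l) =
     {x. (\<forall>y. br x y \<in> asc_series br J l) \<and> (\<forall>y. br (J x) y \<in> asc_series br J l)}"

definition nilpotent_cs :: "('a::euclidean_space \<Rightarrow> 'a \<Rightarrow> 'a) \<Rightarrow> ('a \<Rightarrow> 'a) \<Rightarrow> bool" where
  "nilpotent_cs br J \<longleftrightarrow> (\<exists>t>0. asc_series br J t = UNIV)"

definition t_step :: "('a::euclidean_space \<Rightarrow> 'a \<Rightarrow> 'a) \<Rightarrow> ('a \<Rightarrow> 'a) \<Rightarrow> nat \<Rightarrow> bool" where
  "t_step br J t \<longleftrightarrow> 0 < t \<and> asc_series br J t = UNIV \<and>
     (\<forall>s. 0 < s \<and> s < t \<longrightarrow> asc_series br J s \<noteq> UNIV)"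

end

theory Submission
  imports Defs
begin

lemma even_dim_aux:
  fixes J :: "'a::euclidean_space \<Rightarrow> 'a"
  assumes lin: "linear J" and JJ: "\<forall>x. J (J x) = - x"
    and V: "subspace V" and VJ: "\<forall>x\<in>V. J x \<in> V"
  shows "\<forall>W. subspace W \<and> W \<subseteq> V \<and> (\<forall>x\<in>W. J x \<in> W) \<and> dim V - dim W = k
           \<longrightarrow> even k"
proof (induction k rule: less_induct)
  case (less k)
  show ?case
  proof (intro allI impI)
    fix W assume H: "subspace W \<and> W \<subseteq> V \<and> (\<forall>x\<in>W. J x \<in> W) \<and> dim V - dim W = k"
    hence W: "subspace W" "W \<subseteq> V" "\<forall>x\<in>W. J x \<in> W" "dim V - dim W = k" by auto
    show "even k"
    proof (cases "W = V")
      case True then show ?thesis using W by simp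
    next
      case False
      then obtain v where v: "v \<in> V" "v \<notin> W" using W(2) by blast
      have spW: "span W = W" using W(1) by simp
      have vW: "v \<notin> span W" using v spW by metis
      have Jv: "J v \<notin> span (insert v W)"
      proof
        assume "J v \<in> span (insert v W)"
        then obtain c where c: "J v - c *\<^sub>R v \<in> W" using spW by (auto simp: span_breakdown_eq)
        define w where "w = J v - c *\<^sub>R v"
        have "J w = - v - c *\<^sub>R J v" unfolding w_def using lin JJ
          by (simp add: linear_diff linear_scale)
        hence "J w = - v - c *\<^sub>R (w + c *\<^sub>R v)" unfolding w_def by simp
        hence "- (J w + c *\<^sub>R w) = - ((- v - c *\<^sub>R (w + c *\<^sub>R v)) + c *\<^sub>R w)" by simp
        also have "\<dots> = (1 + c^2) *\<^sub>R v" by (simp add: algebra_simps power2_eq_square)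
        finally have eq: "(1 + c^2) *\<^sub>R v = - (J w + c *\<^sub>R w)" by simp
        have "w \<in> W" using c w_def by simp
        hence "- (J w + c *\<^sub>R w) \<in> W" using W(1,3)
          by (meson subspace_add subspace_neg subspace_scale)
        hence "(1 + c^2) *\<^sub>R v \<in> W" using eq by simp
        hence "(inverse (1 + c^2)) *\<^sub>R ((1 + c^2) *\<^sub>R v) \<in> W" using W(1) subspace_scale by blast
        moreover have "1 + c^2 \<noteq> 0" by (metis add_pos_nonneg zero_less_one zero_le_power2 less_irrefl)
        ultimately show False using v by simp
      qed
      define W' where "W' = span (insert (J v) (insert v W))"
      have dW': "dim W' = dim W + 2"
        unfolding W'_def dim_span using Jv vW by (simp add: dim_insert)
      have W'V: "W' \<subseteq> V" unfolding W'_def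
        using V v W(2) VJ by (metis insert_subset span_minimal)
      have W'J: "\<forall>x\<in>W'. J x \<in> W'"
      proof
        fix x assume "x \<in> W'"
        hence "x \<in> span (insert (J v) (insert v W))" unfolding W'_def .
        moreover have "subspace {x. J x \<in> span (insert (J v) (insert v W))}"
          using linear_subspace_vimage[OF lin, of "span (insert (J v) (insert v W))"] by (simp add: vimage_def)
        ultimately show "J x \<in> W'" unfolding W'_def
        proof (rule span_induct)
          fix x assume "x \<in> insert (J v) (insert v W)"
          then show "J x \<in> span (insert (J v) (insert v W))"
          proof (elim insertE)
            assume "x = J v" then show ?thesis using JJ
              by (simp add: span_base span_neg)
          next
            assume "x = v" then show ?thesis by (simp add: span_base)
          next
            assume "x \<in> W" then show ?thesis using W(3) by (simp add: span_base)
          qed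
        qed
      qed
      have "dim W' \<le> dim V" using W'V by (rule dim_subset)
      hence lt: "dim V - dim W' < k" and kk: "k = dim V - dim W' + 2" using dW' W(4) by auto
      have "subspace W'" unfolding W'_def by simp
      hence "even (dim V - dim W')" using less.IH[OF lt] W'V W'J by blast
      then show ?thesis using kk by simp
    qed
  qed
qed

lemma even_dim_invariant:
  fixes J :: "'a::euclidean_space \<Rightarrow> 'a"
  assumes lin: "linear J" and JJ: "\<forall>x. J (J x) = - x"
    and V: "subspace V" and VJ: "\<forall>x\<in>V. J x \<in> V"
  shows "even (dim V)"
proof -
  have "subspace {0::'a}" by (simp add: subspace_0)
  moreover have "{0} \<subseteq> V" using V by (simp add: subspace_0)
  moreover have "\<forall>x\<in>{0}. J x \<in> {0}" using lin by (simp add: linear_0)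
  ultimately have "even (dim V - dim {0::'a})" using even_dim_aux[OF assms, of "dim V - dim {0::'a}"] by blast
  thus ?thesis by simp
qed

theorem mainTheorem7:
  fixes br :: "'a::euclidean_space \<Rightarrow> 'a \<Rightarrow> 'a"
  assumes "lie_algebra br"
    and "two_step_nilpotent br"
    and "derived_alg br = center br"
    and "odd (dim (derived_alg br))"
  shows "\<forall>J. complex_structure br J \<longrightarrow> t_step br J 3"
proof (intro allI impI)
  fix J assume cs: "complex_structure br J"
  have lin: "linear J" and JJ: "\<forall>x. J (J x) = - x"
    and N: "\<And>x y. br x y + J (br (J x) y + br x (J y)) - br (J x) (J y) = 0"
    using cs unfolding complex_structure_def by auto
  have bil: "bilinear br" using assms(1) unfolding lie_algebra_def by simp
  have z0: "\<And>y. br 0 y = 0" using bilinear_lzero[OF bil] by simp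
  have J0: "J 0 = 0" using lin by (simp add: linear_0)
  have brD: "\<And>x y. br x y \<in> derived_alg br" unfolding derived_alg_def by (rule span_base) blast
  have brC: "\<And>x y. br x y \<in> center br" using brD assms(3) by simp
  have cen: "\<And>u y. u \<in> center br \<Longrightarrow> br u y = 0" unfolding center_def by simp
  have A1: "asc_series br J 1 = {x. (\<forall>y. br x y = 0) \<and> (\<forall>y. br (J x) y = 0)}" by simp
  have A2: "asc_series br J 2 = {x. (\<forall>y. br x y \<in> asc_series br J 1) \<and> (\<forall>y. br (J x) y \<in> asc_series br J 1)}"
    by (simp add: numeral_2_eq_2)
  have A3: "asc_series br J 3 = {x. (\<forall>y. br x y \<in> asc_series br J 2) \<and> (\<forall>y. br (J x) y \<in> asc_series br J 2)}"
    by (simp add: numeral_3_eq_3 numeral_2_eq_2)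
  have key: "\<And>u y. u \<in> center br \<Longrightarrow> br (J u) y \<in> asc_series br J 1"
  proof -
    fix u y assume u: "u \<in> center br"
    have "br u y = 0" "br u (J y) = 0" using cen[OF u] by auto
    hence "J (br (J u) y) = br (J u) (J y)" using N[of u y] by (simp add: algebra_simps)
    hence "J (br (J u) y) \<in> center br" using brC by simp
    then show "br (J u) y \<in> asc_series br J 1" unfolding A1 using cen brC by auto
  qed
  have C2: "\<And>u. u \<in> center br \<Longrightarrow> u \<in> asc_series br J 2"
    unfolding A2 using key cen z0 J0 by (simp add: A1)
  have U3: "asc_series br J 3 = UNIV" unfolding A3 using C2 brC by auto
  have N1: "asc_series br J 1 \<noteq> UNIV"
  proof
    assume "asc_series br J 1 = UNIV"
    hence "\<forall>x y. br x y = 0" unfolding A1 by blast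
    thus False using assms(2) unfolding two_step_nilpotent_def by blast
  qed
  have N2: "asc_series br J 2 \<noteq> UNIV"
  proof
    assume "asc_series br J 2 = UNIV"
    hence "\<forall>x y. br x y \<in> asc_series br J 1" unfolding A2 by blast
    hence Jb: "\<forall>x y. J (br x y) \<in> derived_alg br" unfolding A1 using assms(3) unfolding center_def by auto
    have sub: "subspace (derived_alg br)" unfolding derived_alg_def by simp
    have inv: "\<forall>x\<in>derived_alg br. J x \<in> derived_alg br"
    proof
      fix x assume "x \<in> derived_alg br"
      hence "x \<in> span {br x y |x y. True}" unfolding derived_alg_def .
      moreover have "subspace {x. J x \<in> span {br x y |x y. True}}"
        using linear_subspace_vimage[OF lin, of "span {br x y |x y. True}"] by (simp add: vimage_def)
      ultimately show "J x \<in> derived_alg br" unfolding derived_alg_def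
        by (rule span_induct) (use Jb in \<open>auto simp: derived_alg_def\<close>)
    qed
    have "even (dim (derived_alg br))" by (rule even_dim_invariant[OF lin JJ sub inv])
    thus False using assms(4) by simp
  qed
  show "t_step br J 3" unfolding t_step_def
  proof (intro conjI allI impI)
    fix s :: nat assume "0 < s \<and> s < 3"
    hence "s = 1 \<or> s = 2" by auto
    thus "asc_series br J s \<noteq> UNIV" using N1 N2 by (metis One_nat_def)
  qed (use U3 in auto)
qed

end
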